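(* Let $q$ be a prime power and let $X$ be a polarity graph of the projective plane $PG(2,q)$ having $a$ absolute points (loops retained). Then every independent set $S$ of $X$ satisfies \[ |S|\le \frac{\sqrt q+\sqrt{q+4a\frac{q+\sqrt q+1}{q^2+q+1}}}{2\,\frac{q+\sqrt q+1}{q^2+q+1}}. \]
   Context: A polarity of $PG(2,q)$ is an incidence-preserving bijection $\sigma$ mapping points to lines and lines to points with $\sigma^2$ the identity (equivalently, an automorphism of order two of the point–line incidence graph of $PG(2,q)$ interchanging points and lines). The polarity graph $X$ has the $q^2+q+1$ points as vertices, with $x$ adjacent to $y$ iff $x$ is incident with the line $\sigma(y)$; a point $x$ with $x$ incident with $\sigma(x)$ is absolute and carries a loop. An independent set is a set of vertices no two distinct members of which are adjacent (absolute points may belong to it). *)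

theory Defs
  imports Complex_Main
begin

text \<open>The Desarguesian projective plane PG(2,q) over a finite field 'a with q = CARD('a). A line is represented, as usual, by its dual coordinates, i.e. again a
  1-dimensional subspace (the normal direction); point p lies on line l iff the standard
  bilinear form vanishes on p x l.\<close>

type_synonym 'a vec3 = "'a \<times> 'a \<times> 'a"

fun dot3 :: "'a::comm_ring_1 vec3 \<Rightarrow> 'a vec3 \<Rightarrow> 'a" where
  "dot3 (a, b, c) (d, e, f) = a * d + b * e + c * f"

fun smult3 :: "'a::comm_ring_1 \<Rightarrow> 'a vec3 \<Rightarrow> 'a vec3" where
  "smult3 k (a, b, c) = (k * a, k * b, k * c)"

definition span1 :: "'a::comm_ring_1 vec3 \<Rightarrow> 'a vec3 set" where
  "span1 v = {smult3 k v | k. True}"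

definition pg_points :: "('a::{field,finite} vec3 set) set" where
  "pg_points = {span1 v | v. v \<noteq> (0, 0, 0)}"

definition pg_lines :: "('a::{field,finite} vec3 set) set" where
  "pg_lines = {span1 v | v. v \<noteq> (0, 0, 0)}"

definition pg_incident :: "'a::{field,finite} vec3 set \<Rightarrow> 'a vec3 set \<Rightarrow> bool" where
  "pg_incident p l \<longleftrightarrow> (\<forall>x\<in>p. \<forall>y\<in>l. dot3 x y = 0)"

definition is_polarity :: "('a::{field,finite} vec3 set \<Rightarrow> 'a vec3 set) \<Rightarrow> bool" where
  "is_polarity \<sigma> \<longleftrightarrow>
     (\<forall>p\<in>pg_points. \<sigma> p \<in> pg_lines \<and> \<sigma> (\<sigma> p) = p) \<and>
     (\<forall>l\<in>pg_lines. \<sigma> l \<in> pg_points \<and> \<sigma> (\<sigma> l) = l) \<and>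
     (\<forall>p\<in>pg_points. \<forall>l\<in>pg_lines. pg_incident p l \<longleftrightarrow> pg_incident (\<sigma> l) (\<sigma> p))"

definition polarity_adj :: "('a::{field,finite} vec3 set \<Rightarrow> 'a vec3 set) \<Rightarrow> 'a vec3 set \<Rightarrow> 'a vec3 set \<Rightarrow> bool" where
  "polarity_adj \<sigma> x y \<longleftrightarrow> pg_incident x (\<sigma> y)"

definition absolute_points :: "('a::{field,finite} vec3 set \<Rightarrow> 'a vec3 set) \<Rightarrow> 'a vec3 set set" where
  "absolute_points \<sigma> = {x \<in> pg_points. polarity_adj \<sigma> x x}"

definition polarity_independent :: "('a::{field,finite} vec3 set \<Rightarrow> 'a vec3 set) \<Rightarrow> 'a vec3 set set \<Rightarrow> bool" where
  "polarity_independent \<sigma> S \<longleftrightarrow> S \<subseteq> pg_points \<and>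
     (\<forall>x\<in>S. \<forall>y\<in>S. x \<noteq> y \<longrightarrow> \<not> polarity_adj \<sigma> x y)"

end

theory Submission
  imports Defs "HOL-Analysis.Convex"
begin


lemma dot3_comm: "dot3 u w = dot3 w u"
  by (cases u; cases w) (auto simp: algebra_simps)

lemma dot3_smult_l [simp]: "dot3 (smult3 k u) w = k * dot3 u w"
  by (cases u; cases w) (auto simp: algebra_simps)

lemma dot3_smult_r [simp]: "dot3 u (smult3 k w) = k * dot3 u w"
  by (cases u; cases w) (auto simp: algebra_simps)

lemma smult3_1 [simp]: "smult3 1 v = v" by (cases v) auto
lemma smult3_smult3 [simp]: "smult3 k (smult3 k' v) = smult3 (k*k') v"
  by (cases v) (auto simp: algebra_simps)
lemma smult3_0 [simp]: "smult3 0 v = (0,0,0)" by (cases v) auto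
lemma smult3_zero_iff: "smult3 k (v::'a::field vec3) = (0,0,0) \<longleftrightarrow> k = 0 \<or> v = (0,0,0)"
  by (cases v) auto

lemma smult3_inj:
  fixes v :: "'a::field vec3"
  assumes "v \<noteq> (0,0,0)" "smult3 k v = smult3 k' v" shows "k = k'"
proof -
  obtain a b c where v: "v = (a,b,c)" by (cases v)
  from assms show ?thesis unfolding v by (auto simp: mult_right_cancel)
qed

lemma in_span1: "v \<in> span1 v"
  unfolding span1_def by (auto intro: exI[of _ 1])

lemma zero_in_span1: "(0,0,0) \<in> span1 v"
  unfolding span1_def by (auto intro: exI[of _ 0])

lemma span1_eq:
  fixes v :: "'a::field vec3"
  assumes "x \<in> span1 v" "x \<noteq> (0,0,0)" shows "span1 x = span1 v"
proof -
  from assms obtain k where x: "x = smult3 k v" unfolding span1_def by auto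
  with assms have k: "k \<noteq> 0" by auto
  have v: "v = smult3 (inverse k) x" using k by (simp add: x)
  show ?thesis
  proof
    show "span1 x \<subseteq> span1 v"
    proof
      fix y assume "y \<in> span1 x"
      then obtain k' where "y = smult3 k' x" unfolding span1_def by auto
      then have "y = smult3 (k' * k) v" by (simp add: x)
      then show "y \<in> span1 v" unfolding span1_def by blast
    qed
    show "span1 v \<subseteq> span1 x"
    proof
      fix y assume "y \<in> span1 v"
      then obtain k' where "y = smult3 k' v" unfolding span1_def by auto
      then have "y = smult3 (k' * inverse k) x" by (simp add: v)
      then show "y \<in> span1 x" unfolding span1_def by blast
    qed
  qed
qed

lemma incident_span1:
  "pg_incident (span1 u) (span1 w) \<longleftrightarrow> dot3 u w = 0"
proof
  assume "pg_incident (span1 u) (span1 w)"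
  then show "dot3 u w = 0" unfolding pg_incident_def using in_span1 by blast
next
  assume h: "dot3 u w = 0"
  show "pg_incident (span1 u) (span1 w)" unfolding pg_incident_def
  proof (intro ballI)
    fix x y assume "x \<in> span1 u" "y \<in> span1 w"
    then obtain k k' where "x = smult3 k u" "y = smult3 k' w" unfolding span1_def by auto
    then show "dot3 x y = 0" using h by (simp del: dot3.simps smult3.simps)
  qed
qed

lemma pg_lines_eq: "pg_lines = pg_points"
  unfolding pg_lines_def pg_points_def ..

lemma card_span1:
  fixes v :: "'a::{field,finite} vec3"
  assumes "v \<noteq> (0,0,0)"
  shows "card (span1 v - {(0,0,0)}) = card (UNIV::'a set) - 1"
proof -
  have "span1 v - {(0,0,0)} = (\<lambda>k. smult3 k v) ` (UNIV - {0})"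
    unfolding span1_def using assms smult3_zero_iff[of _ v] by force
  moreover have "inj_on (\<lambda>k. smult3 k v) (UNIV - {0})"
    by (rule inj_onI) (use smult3_inj[OF assms] in auto)
  ultimately show ?thesis by (simp add: card_image card_Diff_singleton)
qed

lemma points_disjoint:
  fixes p p' :: "'a::{field,finite} vec3 set"
  assumes "p \<in> pg_points" "p' \<in> pg_points" "p \<noteq> p'"
  shows "(p - {(0,0,0)}) \<inter> (p' - {(0,0,0)}) = {}"
proof (rule ccontr)
  assume "\<not> ?thesis"
  then obtain x where x: "x \<in> p" "x \<in> p'" "x \<noteq> (0,0,0)" by auto
  from assms obtain v v' where "p = span1 v" "p' = span1 v'" unfolding pg_points_def by blast
  with x span1_eq have "p = span1 x" "p' = span1 x" by (metis, metis)
  with assms show False by simp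
qed

lemma card_union_points:
  fixes Q :: "'a::{field,finite} vec3 set set"
  assumes "Q \<subseteq> pg_points"
  shows "card (\<Union>p\<in>Q. p - {(0,0,0)}) = card Q * (card (UNIV::'a set) - 1)"
proof -
  have "card (\<Union>p\<in>Q. p - {(0,0,0)}) = (\<Sum>p\<in>Q. card (p - {(0,0,0)}))"
    by (rule card_UN_disjoint) (use assms points_disjoint in auto)
  also have "\<dots> = (\<Sum>p\<in>Q. card (UNIV::'a set) - 1)"
  proof (rule sum.cong)
    fix p assume "p \<in> Q"
    with assms obtain v where "p = span1 v" "v \<noteq> (0,0,0)" unfolding pg_points_def by auto
    then show "card (p - {(0,0,0)}) = card (UNIV::'a set) - 1" by (simp add: card_span1)
  qed simp
  finally show ?thesis by simp
qed


lemma cube_factor: "(q::nat) \<ge> 2 \<Longrightarrow> q^3 - 1 = (q^2 + q + 1) * (q - 1)"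
proof -
  assume "q \<ge> 2"
  then obtain m where "q = m + 1" by (metis add.commute le_Suc_ex one_add_one add_leD1)
  then show ?thesis by (simp add: algebra_simps power3_eq_cube power2_eq_square)
qed

lemma sq_factor: "(q::nat) \<ge> 2 \<Longrightarrow> q^2 - 1 = (q + 1) * (q - 1)"
proof -
  assume "q \<ge> 2"
  then obtain m where "q = m + 1" by (metis add.commute le_Suc_ex one_add_one add_leD1)
  then show ?thesis by (simp add: algebra_simps power2_eq_square)
qed

lemma card_vec3: "card (UNIV :: 'a::finite vec3 set) = card (UNIV::'a set) ^ 3"
proof -
  have "(UNIV :: 'a vec3 set) = UNIV \<times> (UNIV \<times> UNIV)" by simp
  then show ?thesis by (simp add: UNIV_Times_UNIV[symmetric] card_cartesian_product power3_eq_cube del: UNIV_Times_UNIV)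
qed

lemma union_all_points:
  "(\<Union>p\<in>(pg_points::'a::{field,finite} vec3 set set). p - {(0,0,0)}) = UNIV - {(0,0,0)}"
proof
  show "(\<Union>p\<in>(pg_points::'a vec3 set set). p - {(0,0,0)}) \<subseteq> UNIV - {(0,0,0)}" by blast
  show "UNIV - {(0,0,0)} \<subseteq> (\<Union>p\<in>(pg_points::'a vec3 set set). p - {(0,0,0)})"
  proof
    fix x :: "'a vec3" assume x: "x \<in> UNIV - {(0,0,0)}"
    then have "span1 x \<in> pg_points" unfolding pg_points_def by blast
    then show "x \<in> (\<Union>p\<in>(pg_points::'a vec3 set set). p - {(0,0,0)})" using x in_span1[of x] by blast
  qed
qed

lemma card_points: "card (pg_points :: 'a::{field,finite} vec3 set set) = card (UNIV::'a set)^2 + card (UNIV::'a set) + 1"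
proof -
  let ?q = "card (UNIV::'a set)"
  have q2: "?q \<ge> 2"
  proof -
    have "{0::'a, 1} \<subseteq> UNIV" by simp
    then have "card {0::'a,1} \<le> ?q" by (rule card_mono[OF finite_UNIV])
    then show ?thesis by simp
  qed
  have "card (pg_points :: 'a vec3 set set) * (?q - 1) = card (UNIV - {(0::'a,0::'a,0::'a)})"
    (is "?L * _ = _")
    using card_union_points[of "pg_points :: 'a vec3 set set"] union_all_points by (metis order_refl)
  also have "\<dots> = ?q^3 - 1" by (simp add: card_Diff_singleton card_vec3)
  also have "\<dots> = (?q^2 + ?q + 1) * (?q - 1)" (is "_ = ?R * _")
    using q2 by (rule cube_factor)
  finally have X: "?L * (?q - 1) = ?R * (?q - 1)" .
  then show ?thesis using q2 by (simp only: mult_cancel2) simp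
qed

fun add3 :: "'a::comm_ring_1 vec3 \<Rightarrow> 'a vec3 \<Rightarrow> 'a vec3" where
  "add3 (a, b, c) (d, e, f) = (a + d, b + e, c + f)"

lemma dot3_add3: "dot3 (add3 x y) w = dot3 x w + dot3 y w"
  by (cases x; cases y; cases w) (auto simp: algebra_simps)

lemma exists_dual:
  fixes w :: "'a::field vec3"
  assumes "w \<noteq> (0,0,0)" shows "\<exists>e. dot3 e w = 1"
proof -
  obtain a b c where w: "w = (a,b,c)" by (cases w)
  show ?thesis
  proof (cases "a \<noteq> 0")
    case True then show ?thesis by (intro exI[of _ "(inverse a, 0, 0)"]) (simp add: w)
  next
    case a: False
    show ?thesis
    proof (cases "b \<noteq> 0")
      case True then show ?thesis by (intro exI[of _ "(0, inverse b, 0)"]) (simp add: w)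
    next
      case False
      with a assms have "c \<noteq> 0" by (simp add: w)
      then show ?thesis by (intro exI[of _ "(0, 0, inverse c)"]) (simp add: w)
    qed
  qed
qed

lemma card_kernel:
  fixes w :: "'a::{field,finite} vec3"
  assumes "w \<noteq> (0,0,0)"
  shows "card {x. dot3 x w = 0} = card (UNIV::'a set)^2"
proof -
  obtain e where e: "dot3 e w = 1" using exists_dual[OF assms] by blast
  define F where "F t = {x. dot3 x w = t}" for t
  have Ft: "card (F t) = card (F 0)" for t
  proof -
    have "F t = (\<lambda>x. add3 x (smult3 t e)) ` F 0"
    proof
      show "F t \<subseteq> (\<lambda>x. add3 x (smult3 t e)) ` F 0"
      proof
        fix x assume x: "x \<in> F t"
        show "x \<in> (\<lambda>x. add3 x (smult3 t e)) ` F 0"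
        proof
          show "x = add3 (add3 x (smult3 (-t) e)) (smult3 t e)"
            by (cases x; cases e) auto
          show "add3 x (smult3 (-t) e) \<in> F 0"
            using x e by (simp add: F_def dot3_add3 del: dot3.simps)
        qed
      qed
      show "(\<lambda>x. add3 x (smult3 t e)) ` F 0 \<subseteq> F t"
        using e by (auto simp: F_def dot3_add3 simp del: dot3.simps)
    qed
    moreover have "inj_on (\<lambda>x. add3 x (smult3 t e)) (F 0)"
    proof (rule inj_onI)
      fix x y assume "add3 x (smult3 t e) = add3 y (smult3 t e)"
      then show "x = y" by (cases x; cases y; cases e) auto
    qed
    ultimately show ?thesis by (simp add: card_image)
  qed
  have "card (UNIV :: 'a vec3 set) = card (\<Union>t\<in>UNIV. F t)"
    by (rule arg_cong[where f=card]) (auto simp: F_def)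
  also have "\<dots> = (\<Sum>t\<in>UNIV. card (F t))"
    by (rule card_UN_disjoint) (auto simp: F_def)
  also have "\<dots> = card (UNIV::'a set) * card (F 0)"
  proof -
    define K where "K = card (F 0)"
    have FK: "\<And>t. card (F t) = K" unfolding K_def by (rule Ft)
    have "(\<Sum>t\<in>UNIV. card (F t)) = (\<Sum>t\<in>(UNIV::'a set). K)" using FK by simp
    then show ?thesis unfolding K_def by simp
  qed
  finally have "card (UNIV::'a set) ^ 3 = card (UNIV::'a set) * card (F 0)" by (simp add: card_vec3)
  then show ?thesis by (simp add: F_def power3_eq_cube power2_eq_square)
qed

lemma card_line:
  fixes w :: "'a::{field,finite} vec3"
  assumes "w \<noteq> (0,0,0)"
  shows "card {p \<in> pg_points. pg_incident p (span1 w)} = card (UNIV::'a set) + 1"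
proof -
  let ?q = "card (UNIV::'a set)"
  let ?Q = "{p \<in> pg_points. pg_incident p (span1 w)}"
  have q2: "?q \<ge> 2"
  proof -
    have "{0::'a, 1} \<subseteq> UNIV" by simp
    then have "card {0::'a,1} \<le> ?q" by (rule card_mono[OF finite_UNIV])
    then show ?thesis by simp
  qed
  have U: "(\<Union>p\<in>?Q. p - {(0,0,0)}) = {x. dot3 x w = 0} - {(0,0,0)}"
  proof
    show "(\<Union>p\<in>?Q. p - {(0,0,0)}) \<subseteq> {x. dot3 x w = 0} - {(0,0,0)}"
      unfolding pg_incident_def using in_span1[of w] by blast
    show "{x. dot3 x w = 0} - {(0,0,0)} \<subseteq> (\<Union>p\<in>?Q. p - {(0,0,0)})"
    proof
      fix x assume x: "x \<in> {x. dot3 x w = 0} - {(0,0,0)}"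
      have "span1 x \<in> pg_points" unfolding pg_points_def using x by blast
      moreover have "pg_incident (span1 x) (span1 w)" using x by (simp add: incident_span1 del: dot3.simps)
      ultimately have "span1 x \<in> ?Q" by blast
      then show "x \<in> (\<Union>p\<in>?Q. p - {(0,0,0)})" using x in_span1[of x] by blast
    qed
  qed
  have "card ?Q * (?q - 1) = card ({x. dot3 x w = 0} - {(0,0,0)})" (is "?L * _ = _")
    using card_union_points[of ?Q] U by simp
  also have "\<dots> = ?q^2 - 1"
  proof -
    have "dot3 (0,0,0) w = 0" by (cases w) auto
    then show ?thesis by (simp add: card_Diff_singleton card_kernel[OF assms] del: dot3.simps)
  qed
  also have "\<dots> = (?q + 1) * (?q - 1)" (is "_ = ?R * _")
    using q2 by (rule sq_factor)
  finally have X: "?L * (?q - 1) = ?R * (?q - 1)" .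
  then show ?thesis using q2 by (simp only: mult_cancel2) simp
qed



fun cross3 :: "'a::comm_ring_1 vec3 \<Rightarrow> 'a vec3 \<Rightarrow> 'a vec3" where
  "cross3 (a, b, c) (d, e, f) = (b*f - c*e, c*d - a*f, a*e - b*d)"

lemma dot_cross1: "dot3 u (cross3 u v) = 0"
  by (cases u; cases v) (simp add: algebra_simps)
lemma dot_cross2: "dot3 v (cross3 u v) = 0"
  by (cases u; cases v) (simp add: algebra_simps)

lemma cross_cross: "cross3 w (cross3 u v) = add3 (smult3 (dot3 v w) u) (smult3 (-(dot3 u w)) v)"
  by (cases u; cases v; cases w) (simp add: algebra_simps)

lemma cross_zero_par:
  fixes x c :: "'a::field vec3"
  assumes "c \<noteq> (0,0,0)" "cross3 x c = (0,0,0)"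
  shows "x \<in> span1 c"
proof -
  obtain a b d where c: "c = (a,b,d)" by (cases c)
  obtain x1 x2 x3 where x: "x = (x1,x2,x3)" by (cases x)
  have e: "x2*d = x3*b" "x3*a = x1*d" "x1*b = x2*a" using assms(2) by (simp_all add: c x)
  have "\<exists>k. x = smult3 k c"
  proof (cases "a \<noteq> 0")
    case True
    show ?thesis
      by (rule exI[of _ "x1 / a"]) (use True e in \<open>simp add: c x field_simps\<close>)
  next
    case a: False
    show ?thesis
    proof (cases "b \<noteq> 0")
      case True
      show ?thesis
        by (rule exI[of _ "x2 / b"]) (use True a e in \<open>simp add: c x field_simps\<close>)
    next
      case False
      with a assms(1) have d: "d \<noteq> 0" by (simp add: c)
      show ?thesis
        by (rule exI[of _ "x3 / d"]) (use d a False e in \<open>simp add: c x field_simps\<close>)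
    qed
  qed
  then show ?thesis unfolding span1_def by blast
qed

lemma unique_line:
  fixes p p' :: "'a::{field,finite} vec3 set"
  assumes "p \<in> pg_points" "p' \<in> pg_points" "p \<noteq> p'"
  shows "\<exists>l\<in>pg_points. pg_incident p l \<and> pg_incident p' l \<and>
           (\<forall>l'\<in>pg_points. pg_incident p l' \<and> pg_incident p' l' \<longrightarrow> l' = l)"
proof -
  from assms obtain u u' where u: "p = span1 u" "u \<noteq> (0,0,0)" and u': "p' = span1 u'" "u' \<noteq> (0,0,0)"
    unfolding pg_points_def by blast
  let ?c = "cross3 u u'"
  have c0: "?c \<noteq> (0,0,0)"
  proof
    assume h: "?c = (0,0,0)"
    have "cross3 u' u = (0,0,0)" using h by (cases u; cases u') (simp add: algebra_simps)
    then have "u' \<in> span1 u" using cross_zero_par[OF u(2)] by blast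
    then have "span1 u' = span1 u" using span1_eq u'(2) by blast
    with u u' assms(3) show False by simp
  qed
  show ?thesis
  proof (intro bexI conjI ballI impI)
    show "span1 ?c \<in> pg_points" unfolding pg_points_def using c0 by blast
    show "pg_incident p (span1 ?c)" unfolding u incident_span1 by (rule dot_cross1)
    show "pg_incident p' (span1 ?c)" unfolding u' incident_span1 by (rule dot_cross2)
    fix l assume l: "l \<in> pg_points" and inc: "pg_incident p l \<and> pg_incident p' l"
    from l obtain w where w: "l = span1 w" "w \<noteq> (0,0,0)" unfolding pg_points_def by blast
    have d: "dot3 u w = 0" "dot3 u' w = 0" using inc unfolding u u' w incident_span1 by auto
    have "cross3 w ?c = (0,0,0)" unfolding cross_cross d by simp
    then have "w \<in> span1 ?c" using cross_zero_par[OF c0] by blast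
    then show "l = span1 ?c" using span1_eq w by blast
  qed
qed



lemma finite_points: "finite (pg_points :: 'a::{field,finite} vec3 set set)"
  by (rule finite_subset[OF subset_UNIV]) simp

lemma inc_sym:
  assumes "p \<in> pg_points" "l \<in> pg_points"
  shows "pg_incident p l \<longleftrightarrow> pg_incident l p"
proof -
  from assms obtain u w where "p = span1 u" "l = span1 w" unfolding pg_points_def by blast
  then show ?thesis by (simp add: incident_span1 dot3_comm del: dot3.simps)
qed

lemma sum_expand:
  fixes f g :: "'b \<Rightarrow> real"
  shows "(\<Sum>p\<in>P. (f p - \<alpha>) * (g p - \<beta>)) =
    (\<Sum>p\<in>P. f p * g p) - \<beta> * (\<Sum>p\<in>P. f p) - \<alpha> * (\<Sum>p\<in>P. g p) + real (card P) * \<alpha> * \<beta>"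
  by (simp add: algebra_simps sum.distrib sum_subtractf sum_distrib_left sum_distrib_right)

lemma quad_bound:
  fixes s c q a :: real
  assumes c: "c > 0" and q: "q \<ge> 0" and a: "a \<ge> 0" and s: "s \<ge> 0"
    and h: "c * s^2 \<le> sqrt q * s + a"
  shows "s \<le> (sqrt q + sqrt (q + 4 * a * c)) / (2 * c)"
proof (rule ccontr)
  assume "\<not> ?thesis"
  then have gt: "s > (sqrt q + sqrt (q + 4 * a * c)) / (2 * c)" by simp
  define r where "r = sqrt (q + 4 * a * c)"
  have r0: "r \<ge> 0" unfolding r_def using q a c by (simp add: less_imp_le)
  have r2: "r^2 = q + 4 * a * c" unfolding r_def using q a c by (simp add: less_imp_le)
  have sq: "(sqrt q)^2 = q" using q by simp
  have sq0: "sqrt q \<ge> 0" using q by simp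
  define R where "R = (sqrt q + r) / (2 * c)"
  define R' where "R' = (sqrt q - r) / (2 * c)"
  have rge: "r \<ge> sqrt q"
    unfolding r_def using a c q by (intro real_sqrt_le_mono) (simp add: mult_nonneg_nonneg)
  have "R' \<le> 0" unfolding R'_def using rge c by (simp add: divide_nonpos_pos)
  have "R \<ge> 0" unfolding R_def using r0 sq0 c by simp
  have sR: "s - R > 0" using gt unfolding R_def r_def by simp
  have sR': "s - R' > 0" using sR \<open>R \<ge> 0\<close> \<open>R' \<le> 0\<close> by simp
  have iden: "c * (s - R) * (s - R') = c * s^2 - sqrt q * s - a"
  proof -
    have "c * (s - R) * (s - R') = c * s^2 - c * s * (R + R') + c * R * R'" by (simp add: algebra_simps power2_eq_square)
    also have "c * s * (R + R') = sqrt q * s" unfolding R_def R'_def using c by (simp add: field_simps)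
    also have "c * R * R' = (q - r^2) / (4 * c)" unfolding R_def R'_def using c sq
      by (simp add: field_simps power2_eq_square)
    also have "\<dots> = - a" using r2 c by (simp add: field_simps)
    finally show ?thesis by simp
  qed
  have "c * (s - R) * (s - R') > 0" using c sR sR' by simp
  with iden h show False by simp
qed



theorem mainTheorem9:
  fixes \<sigma> :: "'a::{field,finite} vec3 set \<Rightarrow> 'a vec3 set"
    and S :: "'a vec3 set set"
  assumes "is_polarity \<sigma>"
    and "polarity_independent \<sigma> S"
  shows "let q = real (card (UNIV :: 'a set)); a = real (card (absolute_points \<sigma>)) in
    real (card S) \<le>
    (sqrt q + sqrt (q + 4 * a * ((q + sqrt q + 1) / (q\<^sup>2 + q + 1))))
      / (2 * ((q + sqrt q + 1) / (q\<^sup>2 + q + 1)))"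
proof -
  let ?P = "pg_points :: 'a vec3 set set"
  let ?inc = "pg_incident :: 'a vec3 set \<Rightarrow> 'a vec3 set \<Rightarrow> bool"
  define qn where "qn = card (UNIV :: 'a set)"
  define q where "q = real qn"
  define n where "n = real (card ?P)"
  define s where "s = real (card S)"
  define aa where "aa = real (card (absolute_points \<sigma>))"
  have finP: "finite ?P" by (rule finite_points)
  have SP: "S \<subseteq> ?P" using assms(2) unfolding polarity_independent_def by blast
  have finS: "finite S" using finite_subset[OF SP finP] .
  have indep: "\<And>x y. x \<in> S \<Longrightarrow> y \<in> S \<Longrightarrow> x \<noteq> y \<Longrightarrow> \<not> ?inc x (\<sigma> y)"
    using assms(2) unfolding polarity_independent_def polarity_adj_def by blast
  have sigP: "\<And>p. p \<in> ?P \<Longrightarrow> \<sigma> p \<in> ?P" and sig2: "\<And>p. p \<in> ?P \<Longrightarrow> \<sigma> (\<sigma> p) = p"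
    using assms(1) unfolding is_polarity_def pg_lines_eq by blast+
  have injsig: "inj_on \<sigma> ?P" by (rule inj_on_inverseI[where g=\<sigma>]) (rule sig2)
  have nval: "n = q^2 + q + 1" unfolding n_def q_def qn_def card_points by simp
  have q2: "q \<ge> 2"
  proof -
    have "{0::'a, 1} \<subseteq> UNIV" by simp
    then have "card {0::'a,1} \<le> qn" unfolding qn_def by (rule card_mono[OF finite_UNIV])
    then show ?thesis unfolding q_def by simp
  qed
  have deg: "card {p \<in> ?P. ?inc y (\<sigma> p)} = qn + 1" if y: "y \<in> ?P" for y
  proof -
    have "{p \<in> ?P. ?inc y (\<sigma> p)} = \<sigma> ` {l \<in> ?P. ?inc y l}"
    proof
      show "{p \<in> ?P. ?inc y (\<sigma> p)} \<subseteq> \<sigma> ` {l \<in> ?P. ?inc y l}"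
      proof
        fix p assume p: "p \<in> {p \<in> ?P. ?inc y (\<sigma> p)}"
        then have "\<sigma> p \<in> {l \<in> ?P. ?inc y l}" using sigP by blast
        moreover have "p = \<sigma> (\<sigma> p)" using p sig2 by simp
        ultimately show "p \<in> \<sigma> ` {l \<in> ?P. ?inc y l}" by blast
      qed
      show "\<sigma> ` {l \<in> ?P. ?inc y l} \<subseteq> {p \<in> ?P. ?inc y (\<sigma> p)}"
        using sigP sig2 by auto
    qed
    then have "card {p \<in> ?P. ?inc y (\<sigma> p)} = card {l \<in> ?P. ?inc y l}"
      using card_image[OF inj_on_subset[OF injsig]] by (metis (no_types, lifting) mem_Collect_eq subsetI)
    also have "{l \<in> ?P. ?inc y l} = {l \<in> ?P. ?inc l y}" using inc_sym y by blast
    also have "card \<dots> = qn + 1"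
    proof -
      from y obtain w where "y = span1 w" "w \<noteq> (0,0,0)" unfolding pg_points_def by blast
      then show ?thesis using card_line unfolding qn_def by blast
    qed
    finally show ?thesis .
  qed
  have pair: "card {p \<in> ?P. ?inc y (\<sigma> p) \<and> ?inc z (\<sigma> p)} = 1"
    if y: "y \<in> ?P" and z: "z \<in> ?P" and yz: "y \<noteq> z" for y z
  proof -
    obtain l where l: "l \<in> ?P" "?inc y l" "?inc z l"
      and lu: "\<And>l'. l' \<in> ?P \<Longrightarrow> ?inc y l' \<Longrightarrow> ?inc z l' \<Longrightarrow> l' = l"
      using unique_line[OF y z yz] by blast
    have "{p \<in> ?P. ?inc y (\<sigma> p) \<and> ?inc z (\<sigma> p)} = {\<sigma> l}"
    proof
      show "{p \<in> ?P. ?inc y (\<sigma> p) \<and> ?inc z (\<sigma> p)} \<subseteq> {\<sigma> l}"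
      proof
        fix p assume p: "p \<in> {p \<in> ?P. ?inc y (\<sigma> p) \<and> ?inc z (\<sigma> p)}"
        then have "\<sigma> p = l" using lu sigP by blast
        then have "p = \<sigma> l" using p sig2 by force
        then show "p \<in> {\<sigma> l}" by simp
      qed
      show "{\<sigma> l} \<subseteq> {p \<in> ?P. ?inc y (\<sigma> p) \<and> ?inc z (\<sigma> p)}"
        using l sigP sig2 by simp
    qed
    then show ?thesis by simp
  qed
  define d where "d p = real (card {y \<in> S. ?inc y (\<sigma> p)})" for p
  have d_sum: "d p = (\<Sum>y\<in>S. of_bool (?inc y (\<sigma> p)))" for p
    unfolding d_def using finS by (simp add: Int_def Collect_conj_eq[symmetric] conj_commute)
  have B: "(\<Sum>p\<in>?P. d p) = s * (q + 1)"
  proof -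
    have "(\<Sum>p\<in>?P. d p) = (\<Sum>y\<in>S. \<Sum>p\<in>?P. of_bool (?inc y (\<sigma> p)))"
      unfolding d_sum by (rule sum.swap)
    also have "\<dots> = (\<Sum>y\<in>S. q + 1)"
    proof (rule sum.cong[OF refl])
      fix y assume "y \<in> S"
      then have "y \<in> ?P" using SP by blast
      then show "(\<Sum>p\<in>?P. of_bool (?inc y (\<sigma> p))) = q + 1"
        using deg[of y] finP by (simp add: q_def Int_def Collect_conj_eq[symmetric] conj_commute)
    qed
    finally show ?thesis unfolding s_def by (simp add: algebra_simps)
  qed
  have C: "(\<Sum>p\<in>?P. (d p)^2) = s * (q + s)"
  proof -
    have "(\<Sum>p\<in>?P. (d p)^2) = (\<Sum>p\<in>?P. \<Sum>y\<in>S. \<Sum>z\<in>S. of_bool (?inc y (\<sigma> p) \<and> ?inc z (\<sigma> p)))"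
      unfolding power2_eq_square d_sum sum_product by (simp add: of_bool_conj)
    also have "\<dots> = (\<Sum>y\<in>S. \<Sum>z\<in>S. \<Sum>p\<in>?P. of_bool (?inc y (\<sigma> p) \<and> ?inc z (\<sigma> p)))"
    proof -
      have "(\<Sum>p\<in>?P. \<Sum>y\<in>S. \<Sum>z\<in>S. (of_bool (?inc y (\<sigma> p) \<and> ?inc z (\<sigma> p)) :: real))
          = (\<Sum>y\<in>S. \<Sum>p\<in>?P. \<Sum>z\<in>S. (of_bool (?inc y (\<sigma> p) \<and> ?inc z (\<sigma> p)) :: real))"
        by (rule sum.swap)
      also have "\<dots> = (\<Sum>y\<in>S. \<Sum>z\<in>S. \<Sum>p\<in>?P. (of_bool (?inc y (\<sigma> p) \<and> ?inc z (\<sigma> p)) :: real))"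
        by (rule sum.cong[OF refl], rule sum.swap)
      finally show ?thesis .
    qed
    also have "\<dots> = (\<Sum>y\<in>S. \<Sum>z\<in>S. (1 + of_bool (z = y) * q))"
    proof (intro sum.cong[OF refl])
      fix y z assume yS: "y \<in> S" and zS: "z \<in> S"
      then have yP: "y \<in> ?P" and zP: "z \<in> ?P" using SP by blast+
      have "(\<Sum>p\<in>?P. of_bool (?inc y (\<sigma> p) \<and> ?inc z (\<sigma> p)) :: real)
          = real (card {p \<in> ?P. ?inc y (\<sigma> p) \<and> ?inc z (\<sigma> p)})"
        using finP by (simp add: Int_def Collect_conj_eq[symmetric] conj_commute)
      also have "\<dots> = 1 + of_bool (z = y) * q"
      proof (cases "z = y")
        case True
        then show ?thesis using deg[OF yP] by (simp add: q_def)
      next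
        case False
        then show ?thesis using pair[OF yP zP] by simp
      qed
      finally show "(\<Sum>p\<in>?P. of_bool (?inc y (\<sigma> p) \<and> ?inc z (\<sigma> p))) = 1 + of_bool (z = y) * q" .
    qed
    also have "\<dots> = (\<Sum>y\<in>S. s + q)"
    proof (rule sum.cong[OF refl])
      fix y assume "y \<in> S"
      then show "(\<Sum>z\<in>S. (1 + of_bool (z = y) * q)) = s + q"
        using finS by (simp add: sum.distrib s_def)
    qed
    finally show ?thesis unfolding s_def by (simp add: algebra_simps)
  qed
  have A: "(\<Sum>p\<in>S. d p) \<le> aa"
  proof -
    have "(\<Sum>p\<in>S. d p) = (\<Sum>p\<in>S. of_bool (p \<in> absolute_points \<sigma>))"
    proof (rule sum.cong[OF refl])
      fix p assume pS: "p \<in> S"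
      have "{y \<in> S. ?inc y (\<sigma> p)} = (if p \<in> absolute_points \<sigma> then {p} else {})"
        using pS indep SP unfolding absolute_points_def polarity_adj_def by auto
      then show "d p = of_bool (p \<in> absolute_points \<sigma>)" unfolding d_def by simp
    qed
    also have "\<dots> = real (card (S \<inter> absolute_points \<sigma>))" using finS by (simp add: Int_def)
    also have "\<dots> \<le> aa" unfolding aa_def
      by (simp add: card_mono finite_subset[OF _ finP] absolute_points_def)
    finally show ?thesis .
  qed
  define aS where "aS = (\<Sum>p\<in>S. d p)"
  define u where "u p = (of_bool (p \<in> S) :: real)" for p
  define \<alpha> where "\<alpha> = s / n"
  define \<beta> where "\<beta> = s * (q + 1) / n"
  have npos: "n > 0" using nval q2 by (simp add: add_pos_nonneg)
  have sn: "s \<le> n" unfolding s_def n_def using card_mono[OF finP SP] by simp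
  have s0: "s \<ge> 0" unfolding s_def by simp
  have ud: "(\<Sum>p\<in>?P. u p * d p) = aS"
    unfolding u_def aS_def using finP SP by (simp add: Int_absorb1 Int_commute)
  have u1: "(\<Sum>p\<in>?P. u p) = s"
    unfolding u_def s_def using finP SP by (simp add: Int_absorb1 Int_commute)
  have uu: "(\<Sum>p\<in>?P. u p * u p) = s"
    unfolding u_def s_def using finP SP by (simp add: Int_absorb1 Int_commute)
  define X where "X = (\<Sum>p\<in>?P. (u p - \<alpha>) * (d p - \<beta>))"
  define Y where "Y = (\<Sum>p\<in>?P. (u p - \<alpha>) * (u p - \<alpha>))"
  define Z where "Z = (\<Sum>p\<in>?P. (d p - \<beta>) * (d p - \<beta>))"
  have Xv: "X = aS - s^2 * (q + 1) / n"
    unfolding X_def sum_expand ud u1 B using npos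
    by (simp add: \<alpha>_def \<beta>_def n_def[symmetric] field_simps power2_eq_square)
  have Yv: "Y = s - s^2 / n"
    unfolding Y_def sum_expand uu u1 using npos
    by (simp add: \<alpha>_def n_def[symmetric] field_simps power2_eq_square)
  have Zv0: "Z = s * (q + s) - s^2 * (q + 1)^2 / n"
  proof -
    have "Z = (\<Sum>p\<in>?P. d p * d p) - \<beta> * (\<Sum>p\<in>?P. d p) - \<beta> * (\<Sum>p\<in>?P. d p) + n * \<beta> * \<beta>"
      unfolding Z_def sum_expand n_def ..
    also have "(\<Sum>p\<in>?P. d p * d p) = s * (q + s)" using C by (simp add: power2_eq_square)
    finally have Z1: "Z = s * (q + s) - 2 * (\<beta> * (s * (q + 1))) + n * \<beta> * \<beta>" unfolding B by simp
    have b1: "\<beta> * (s * (q + 1)) = s^2 * (q + 1)^2 / n" unfolding \<beta>_def by (simp add: power2_eq_square)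
    have b2: "n * \<beta> * \<beta> = s^2 * (q + 1)^2 / n" unfolding \<beta>_def using npos by (simp add: power2_eq_square)
    show ?thesis unfolding Z1 b1 b2 by simp
  qed
  have Zv: "Z = q * Y"
    unfolding Zv0 Yv using npos nval by (simp add: field_simps power2_eq_square)
  have CS: "X^2 \<le> Y * Z"
    unfolding X_def Y_def Z_def using Cauchy_Schwarz_ineq_sum[of "\<lambda>p. u p - \<alpha>" "\<lambda>p. d p - \<beta>" ?P]
    by (simp add: power2_eq_square)
  have Y0: "Y \<ge> 0" unfolding Yv using npos sn s0
  proof -
    have "s^2 / n \<le> s" using npos sn s0 by (simp add: divide_le_eq power2_eq_square mult_left_mono)
    then show "0 \<le> s - s^2 / n" by simp
  qed
  have q0: "q \<ge> 0" using q2 by simp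
  have key: "- X \<le> sqrt q * Y"
  proof (cases "- X \<le> 0")
    case True
    then show ?thesis using Y0 q0 by (meson order_trans mult_nonneg_nonneg real_sqrt_ge_zero)
  next
    case False
    have "(- X)^2 \<le> (sqrt q * Y)^2"
    proof -
      have E: "(sqrt q * Y)^2 = Y * Z" unfolding Zv power_mult_distrib using q0
        by (simp add: power2_eq_square)
      show ?thesis unfolding E using CS by simp
    qed
    moreover have "0 \<le> sqrt q * Y" using Y0 q0 by simp
    ultimately show ?thesis by (rule power2_le_imp_le)
  qed
  have aS_le: "aS \<le> aa" unfolding aS_def by (rule A)
  define c where "c = (q + sqrt q + 1) / (q^2 + q + 1)"
  have cpos: "c > 0" unfolding c_def using q0
    by (intro divide_pos_pos add_pos_pos add_nonneg_pos) (simp_all add: add_nonneg_nonneg)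
  have ineq: "c * s^2 \<le> sqrt q * s + aa"
  proof -
    have "c * s^2 = (q + 1) * s^2 / n + sqrt q * s^2 / n" unfolding c_def nval[symmetric] using npos by (simp add: field_simps)
    also have "\<dots> = s^2 * (q + 1) / n + sqrt q * (s^2 / n)" by simp
    also have "\<dots> \<le> sqrt q * s + aS"
      using key unfolding Xv Yv by (simp add: right_diff_distrib)
    finally show ?thesis using aS_le by simp
  qed
  have aa0: "aa \<ge> 0" unfolding aa_def by simp
  have "s \<le> (sqrt q + sqrt (q + 4 * aa * c)) / (2 * c)"
    by (rule quad_bound[OF cpos q0 aa0 s0 ineq])
  then show ?thesis unfolding Let_def c_def q_def qn_def aa_def s_def .
qed

end
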